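(* Let $\alpha>0$ and let $\mathit{rc}_\alpha$ be the rate of change function defined below. Then $\mathit{rc}_\alpha(x)<0$ for all $x\in(-1,1)$.
   Context: Let $\alpha>0$, $\varepsilon_\alpha=\frac{1}{4\alpha^2}$. The constant function $u\equiv\alpha$ solves the Helfrich Dirichlet problem $\frac{1}{u\sqrt{1+u'^2}}\frac{d}{dx}\bigl(\frac{u}{\sqrt{1+u'^2}}H'\bigr)+\frac12 H\bigl(\frac{u''}{(1+u'^2)^{3/2}}+\frac{1}{u\sqrt{1+u'^2}}\bigr)^2-2\varepsilon H=0$ in $(-1,1)$, $u(\pm1)=\alpha$, $u'(\pm1)=0$ (with $H=\frac12(\frac{1}{u\sqrt{1+u'^2}}-\frac{u''}{(1+u'^2)^{3/2}})$) for $\varepsilon=\varepsilon_\alpha$, and by the implicit function theorem there is a smooth family $(u_\varepsilon)$ of solutions for $\varepsilon$ near $\varepsilon_\alpha$ with $u_{\varepsilon_\alpha}\equiv\alpha$. The rate of change function is $\mathit{rc}_\alpha:=\frac{\partial u_\varepsilon}{\partial\varepsilon}\big|_{\varepsilon=\varepsilon_\alpha}$; equivalently, $\mathit{rc}_\alpha$ is the unique solution of $\mathit{rc}_\alpha^{(iv)}+\frac{1}{\alpha^4}\mathit{rc}_\alpha=-\frac{2}{\alpha}$ in $(-1,1)$, $\mathit{rc}_\alpha(\pm1)=\mathit{rc}_\alpha'(\pm1)=0$. *)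

theory Defs
  imports "HOL-Analysis.Analysis"
begin

text \<open>A classical solution of the boundary value problem characterising the rate of
change function rc_alpha:
  u'''' + u / alpha^4 = -2/alpha on (-1,1),  u(-1) = u(1) = 0,  u'(-1) = u'(1) = 0.
u is four times differentiable in the open interval (with iterated derivatives
given by deriv), and at the endpoints u has one-sided derivative 0 relative to [-1,1]
and value 0.\<close>

definition rc_bvp :: "real \<Rightarrow> (real \<Rightarrow> real) \<Rightarrow> bool" where
  "rc_bvp \<alpha> u \<longleftrightarrow>
     (\<forall>k<4. \<forall>x\<in>{-1<..<1}. ((deriv ^^ k) u) differentiable (at x)) \<and>
     (\<forall>x\<in>{-1<..<1}. (deriv ^^ 4) u x + u x / \<alpha> ^ 4 = - 2 / \<alpha>) \<and>
     u (-1) = 0 \<and> u 1 = 0 \<and>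
     (u has_real_derivative 0) (at (-1) within {-1..1}) \<and>
     (u has_real_derivative 0) (at 1 within {-1..1})"

end

theory Submission
  imports Defs
begin

lemma key_identity:
  fixes t y :: real
  shows "2 * (sin t * cos t + sinh t * cosh t - (cosh t * sin t + sinh t * cos t) * (cosh y * cos y)
          - (cosh t * sin t - sinh t * cos t) * (sinh y * sin y))
       = (sinh(t-y) - sin(t-y)) * (cosh(t+y) - cos(t+y)) + (cosh(t-y)-cos(t-y)) * (sinh(t+y)-sin(t+y))"
proof -
  have p1: "sin t ^2 + cos t^2 = 1" "sin y ^2 + cos y^2 = 1" by simp_all
  have p2: "cosh t ^2 - sinh t^2 = 1" "cosh y ^2 - sinh y^2 = 1" by (simp_all add: hyperbolic_pythagoras)
  show ?thesis unfolding sin_add sin_diff cos_add cos_diff sinh_add sinh_diff cosh_add cosh_diff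
    using p1 p2 by algebra
qed

lemma sinh_gt_self: fixes a :: real assumes "a > 0" shows "sinh a > a"
proof -
  have "(\<lambda>t. sinh t - t) 0 < (\<lambda>t. sinh t - t) a"
  proof (rule DERIV_pos_imp_increasing_open[OF assms])
    fix x :: real assume "0 < x" "x < a"
    then have "cosh x - 1 > 0" using cosh_real_ge_1[of x] cosh_real_one_iff[of x] by linarith
    then show "\<exists>y. ((\<lambda>t. sinh t - t) has_real_derivative y) (at x) \<and> y > 0"
      by (intro exI[of _ "cosh x - 1"]) (auto intro!: derivative_eq_intros)
  qed (intro continuous_intros)
  then show ?thesis by simp
qed

lemma sinh_sub_sin_pos: fixes a :: real assumes "a > 0" shows "sinh a - sin a > 0"
  using sinh_gt_self[OF assms] sin_x_le_x[of a] assms by linarith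

lemma cosh_sub_cos_pos: fixes a :: real assumes "a \<noteq> 0" shows "cosh a - cos a > 0"
  using cosh_real_ge_1[of a] cosh_real_one_iff[of a] cos_le_one[of a] assms by linarith

lemma shch_gt: fixes t :: real assumes "t > 0" shows "sinh t  *  cosh t > \<bar>sin t  *  cos t\<bar>"
proof -
  have a: "sinh t > \<bar>sin t\<bar>" using sinh_gt_self[OF assms] abs_sin_x_le_abs_x[of t] assms by linarith
  have b: "cosh t \<ge> 1" by (rule cosh_real_ge_1)
  have c: "\<bar>cos t\<bar> \<le> 1" by simp
  have "\<bar>sin t  *  cos t\<bar> = \<bar>sin t\<bar>  *  \<bar>cos t\<bar>" by (simp add: abs_mult)
  also have "\<dots> \<le> \<bar>sin t\<bar>  *  cosh t" using b c by (intro mult_left_mono) linarith+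
  also have "\<dots> < sinh t  *  cosh t" using a b by (intro mult_strict_right_mono) auto
  finally show ?thesis .
qed

lemma two_ab_le: fixes a b :: real shows "2 * \<bar>a * b\<bar> \<le> a^2 + b^2"
proof -
  have "0 \<le> (\<bar>a\<bar> - \<bar>b\<bar>)^2" by simp
  then show ?thesis by (simp add: power2_eq_square algebra_simps abs_mult)
qed

lemma abs4: fixes a b c d :: real shows "\<bar>a+b+c-d\<bar> \<le> \<bar>a\<bar>+\<bar>b\<bar>+\<bar>c\<bar>+\<bar>d\<bar>" by arith

lemma sq_bound: fixes k a b c d :: real assumes "k \<ge> 0"
  shows "(a^2 + b^2) + (b^2 + c^2) + (c^2 + d^2) + k * (d^2 + a^2) \<le> (2 + k) * (a^2 + b^2 + c^2 + d^2)"
proof -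
  have "k * (b^2 + c^2) \<ge> 0" using assms by simp
  moreover have "a^2 \<ge> 0" "d^2 \<ge> 0" by simp_all
  ultimately show ?thesis by (simp add: algebra_simps)
qed

lemma ode4_zero:
  fixes f0 f1 f2 f3 :: "real \<Rightarrow> real" and k x :: real
  assumes k: "k \<ge> 0"
    and d0: "\<And>x. x \<in> {-1<..<1} \<Longrightarrow> (f0 has_real_derivative f1 x) (at x)"
    and d1: "\<And>x. x \<in> {-1<..<1} \<Longrightarrow> (f1 has_real_derivative f2 x) (at x)"
    and d2: "\<And>x. x \<in> {-1<..<1} \<Longrightarrow> (f2 has_real_derivative f3 x) (at x)"
    and d3: "\<And>x. x \<in> {-1<..<1} \<Longrightarrow> (f3 has_real_derivative (- k * f0 x)) (at x)"
    and i: "f0 0 = 0" "f1 0 = 0" "f2 0 = 0" "f3 0 = 0"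
    and x: "x \<in> {-1<..<1}"
  shows "f0 x = 0"
proof -
  define E where "E x = f0 x ^ 2 + f1 x ^ 2 + f2 x ^ 2 + f3 x ^ 2" for x
  define E' where "E' x = 2 * (f0 x * f1 x + f1 x * f2 x + f2 x * f3 x - k * f3 x * f0 x)" for x
  define M where "M = 2 + k"
  have dE: "(E has_real_derivative E' y) (at y)" if "y \<in> {-1<..<1}" for y
  proof -
    note D = d0[OF that] d1[OF that] d2[OF that] d3[OF that]
    have "(E has_real_derivative (2 * f0 y * f1 y + 2 * f1 y * f2 y + 2 * f2 y * f3 y + 2 * f3 y * (- k * f0 y))) (at y)"
      unfolding E_def using D by (auto intro!: derivative_eq_intros simp: algebra_simps)
    then show ?thesis by (rule DERIV_cong) (simp add: E'_def algebra_simps)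
  qed
  have Enn: "E y \<ge> 0" for y unfolding E_def by simp
  have bound: "\<bar>E' y\<bar> \<le> M * E y" for y
  proof -
    have "\<bar>E' y\<bar> \<le> 2 * \<bar>f0 y * f1 y\<bar> + 2 * \<bar>f1 y * f2 y\<bar> + 2 * \<bar>f2 y * f3 y\<bar> + k * (2 * \<bar>f3 y * f0 y\<bar>)"
      unfolding E'_def using k abs4[of "2*(f0 y * f1 y)" "2*(f1 y * f2 y)" "2*(f2 y * f3 y)" "k*(2*(f3 y * f0 y))"]
      by (simp add: abs_mult algebra_simps)
    also have "\<dots> \<le> (f0 y^2 + f1 y^2) + (f1 y^2 + f2 y^2) + (f2 y^2 + f3 y^2) + k * (f3 y^2 + f0 y^2)"
      using two_ab_le k by (intro add_mono mult_left_mono) auto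
    also have "\<dots> \<le> M * E y" unfolding M_def E_def using k
      using sq_bound[of k] by blast
    finally show ?thesis .
  qed
  have E0: "E 0 = 0" unfolding E_def using i by simp
  have cont: "continuous_on {a..b} (\<lambda>y. E y * exp (c * y))" if "{a..b} \<subseteq> {-1<..<1}" for a b c
  proof -
    have "continuous_on {a..b} E"
      by (rule continuous_at_imp_continuous_on) (use that dE DERIV_isCont in blast)
    then show ?thesis by (intro continuous_intros)
  qed
  have "E x = 0"
  proof (cases "x \<ge> 0")
    case True
    have "(\<lambda>y. E y * exp (- M * y)) x \<le> (\<lambda>y. E y * exp (- M * y)) 0"
    proof (rule DERIV_nonpos_imp_decreasing_open[OF True])
      fix y assume y: "0 < y" "y < x"
      then have yI: "y \<in> {-1<..<1}" using x by auto
      have "E' y - M * E y \<le> 0" using bound[of y] by linarith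
      then have "(E' y - M * E y) * exp (- M * y) \<le> 0" by (simp add: mult_nonpos_nonneg)
      moreover have "((\<lambda>y. E y * exp (- M * y)) has_real_derivative (E' y - M * E y) * exp (- M * y)) (at y)"
        using dE[OF yI] by (auto intro!: derivative_eq_intros simp: algebra_simps)
      ultimately show "\<exists>z. ((\<lambda>y. E y * exp (- M * y)) has_real_derivative z) (at y) \<and> z \<le> 0"
        by blast
    next
      show "continuous_on {0..x} (\<lambda>y. E y * exp (- M * y))" using x True by (intro cont) auto
    qed
    then have "E x * exp (- M * x) \<le> 0" using E0 by simp
    then have "E x \<le> 0" by (simp add: mult_le_0_iff)
    then show ?thesis using Enn[of x] by linarith
  next
    case False
    have "(\<lambda>y. E y * exp (M * y)) x \<le> (\<lambda>y. E y * exp (M * y)) 0"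
    proof (rule DERIV_nonneg_imp_increasing_open[of x 0])
      show "x \<le> 0" using False by simp
      fix y assume y: "x < y" "y < 0"
      then have yI: "y \<in> {-1<..<1}" using x by auto
      have "E' y + M * E y \<ge> 0" using bound[of y] by linarith
      then have "(E' y + M * E y) * exp (M * y) \<ge> 0" by simp
      moreover have "((\<lambda>y. E y * exp (M * y)) has_real_derivative (E' y + M * E y) * exp (M * y)) (at y)"
        using dE[OF yI] by (auto intro!: derivative_eq_intros simp: algebra_simps)
      ultimately show "\<exists>z. ((\<lambda>y. E y * exp (M * y)) has_real_derivative z) (at y) \<and> z \<ge> 0"
        by blast
    next
      show "continuous_on {x..0} (\<lambda>y. E y * exp (M * y))" using x False by (intro cont) auto
    qed
    then have "E x * exp (M * x) \<le> 0" using E0 by simp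
    then have "E x \<le> 0" by (simp add: mult_le_0_iff)
    then show ?thesis using Enn[of x] by linarith
  qed
  moreover have "f1 x ^ 2 \<ge> 0" "f2 x ^ 2 \<ge> 0" "f3 x ^ 2 \<ge> 0" "f0 x ^ 2 \<ge> 0" by simp_all
  ultimately have "f0 x ^ 2 = 0" unfolding E_def by linarith
  then show ?thesis by simp
qed

lemma alg1: fixes G J s co sh ch :: real assumes "G  *  ch  *  s + J  *  sh  *  co = 0" "(G+J)  *  ch  *  co + (G-J)  *  sh  *  s = 0" "s^2+co^2=1" "ch^2-sh^2=1" shows "G  *  (s  *  co - sh  *  ch) = 0"
  using assms by algebra
lemma alg2: fixes G J s co sh ch :: real assumes "G  *  ch  *  s + J  *  sh  *  co = 0" "(G+J)  *  ch  *  co + (G-J)  *  sh  *  s = 0" "s^2+co^2=1" "ch^2-sh^2=1" shows "J  *  (sh  *  ch - s  *  co) = 0"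
  using assms by algebra
lemma alg3: fixes A B c s co sh ch :: real assumes e1: "A * ch * co + B * sh * s = c" and e3: "(B-A) * ch * s + (A+B) * sh * co = 0" and p: "s^2+co^2=1" "ch^2-sh^2=1" shows "A * (s * co + sh * ch) = c * (ch * s+sh * co)"
proof -
  have "A * (s * co+sh * ch) = (A * ch * co + B * sh * s) * (ch * s+sh * co) - ((B-A) * ch * s + (A+B) * sh * co) * (sh * s) + A * s * co * (1-(ch^2-sh^2)) + A * sh * ch * (1-(s^2+co^2))"
    by (simp add: algebra_simps power2_eq_square)
  then show ?thesis using e1 e3 p by simp
qed
lemma alg4: fixes A B c s co sh ch :: real assumes e1: "A * ch * co + B * sh * s = c" and e3: "(B-A) * ch * s + (A+B) * sh * co = 0" and p: "s^2+co^2=1" "ch^2-sh^2=1" shows "B * (s * co + sh * ch) = c * (ch * s-sh * co)"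
proof -
  have "B * (s * co+sh * ch) = (A * ch * co + B * sh * s) * (ch * s-sh * co) + ((B-A) * ch * s + (A+B) * sh * co) * (ch * co) + B * s * co * (1-(ch^2-sh^2)) + B * sh * ch * (1-(s^2+co^2))"
    by (simp add: algebra_simps power2_eq_square)
  then show ?thesis using e1 e3 p by simp
qed

definition Lc :: "real \<Rightarrow> real \<Rightarrow> real \<Rightarrow> real \<Rightarrow> real \<Rightarrow> real" where
  "Lc A B G J y = A * cosh y * cos y + B * sinh y * sin y + G * cosh y * sin y + J * sinh y * cos y"

lemma Lc_deriv: "((\<lambda>x. Lc A B G J (b * x)) has_real_derivative b * Lc (G+J) (G-J) (B-A) (A+B) (b * x)) (at x)"
  unfolding Lc_def by (rule DERIV_cong, (auto intro!: derivative_eq_intros)[1]) (simp add: algebra_simps)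

lemma Lc_0: "Lc A B G J 0 = A" by (simp add: Lc_def)

lemma final_alg:
  fixes t c A B G J y :: real
  assumes t: "t > 0" and c: "c > 0" and y: "\<bar>y\<bar> < t"
    and e1: "Lc A B G J t = c" and e2: "Lc A B G J (-t) = c"
    and e3: "Lc (G+J) (G-J) (B-A) (A+B) t = 0" and e4: "Lc (G+J) (G-J) (B-A) (A+B) (-t) = 0"
  shows "Lc A B G J y < c"
proof -
  have p1: "sin t ^2 + cos t^2 = 1" by simp
  have p2: "cosh t ^2 - sinh t^2 = 1" by (simp add: hyperbolic_pythagoras)
  have q1: "A * cosh t * cos t + B * sinh t * sin t = c" "G * cosh t * sin t + J * sinh t * cos t = 0"
    using e1 e2 by (simp_all add: Lc_def)
  have q2: "(G+J) * cosh t * cos t + (G-J) * sinh t * sin t = 0" "(B-A) * cosh t * sin t + (A+B) * sinh t * cos t = 0"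
    using e3 e4 by (simp_all add: Lc_def)
  have gt: "sinh t * cosh t > \<bar>sin t * cos t\<bar>" by (rule shch_gt[OF t])
  have "G * (sin t * cos t - sinh t * cosh t) = 0" using alg1[OF q1(2) q2(1) p1 p2] .
  then have G: "G = 0" using gt by auto
  have "J * (sinh t * cosh t - sin t * cos t) = 0" using alg2[OF q1(2) q2(1) p1 p2] .
  then have J: "J = 0" using gt by auto
  define D where "D = sin t * cos t + sinh t * cosh t"
  have D: "D > 0" unfolding D_def using gt by linarith
  have AD: "A * D = c * (cosh t * sin t + sinh t * cos t)" unfolding D_def using alg3[OF q1(1) q2(2) p1 p2] by (simp add: algebra_simps)
  have BD: "B * D = c * (cosh t * sin t - sinh t * cos t)" unfolding D_def using alg4[OF q1(1) q2(2) p1 p2] by (simp add: algebra_simps)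
  have "D * (c - Lc A B G J y) = c * (D - (cosh t * sin t + sinh t * cos t) * (cosh y * cos y)
          - (cosh t * sin t - sinh t * cos t) * (sinh y * sin y))"
  proof -
    have "D * (c - Lc A B G J y) = D * c - (A * D) * (cosh y * cos y) - (B * D) * (sinh y * sin y)"
      by (simp add: Lc_def G J algebra_simps)
    also have "\<dots> = D * c - (c * (cosh t * sin t + sinh t * cos t)) * (cosh y * cos y) - (c * (cosh t * sin t - sinh t * cos t)) * (sinh y * sin y)"
      by (simp only: AD BD)
    finally show ?thesis by (simp add: algebra_simps)
  qed
  also have "\<dots> = c / 2 * ((sinh(t-y) - sin(t-y)) * (cosh(t+y) - cos(t+y)) + (cosh(t-y)-cos(t-y)) * (sinh(t+y)-sin(t+y)))"
    using key_identity[of t y] unfolding D_def by simp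
  also have "\<dots> > 0"
  proof -
    have a: "t - y > 0" "t + y > 0" using y by auto
    show ?thesis using c sinh_sub_sin_pos[OF a(1)] sinh_sub_sin_pos[OF a(2)]
        cosh_sub_cos_pos[of "t-y"] cosh_sub_cos_pos[of "t+y"] a
      by (intro mult_pos_pos add_pos_pos) auto
  qed
  finally show ?thesis using D by (simp add: zero_less_mult_iff)
qed

lemma endpoint_value:
  fixes f g :: "real \<Rightarrow> real" and a :: real
  assumes "(f has_real_derivative 0) (at a within {-1..1})" "a = 1 \<or> a = -1"
    and "continuous (at a) g" "\<And>x. x \<in> {-1<..<1} \<Longrightarrow> f x = g x"
  shows "f a = g a"
proof -
  have cf: "continuous (at a within {-1..1}) f" using assms(1) by (rule DERIV_continuous)
  from assms(2) show ?thesis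
  proof
    assume a: "a = 1"
    have "(f \<longlongrightarrow> f a) (at_left 1)" using cf a at_within_Icc_at_left[of "-1::real" 1]
      by (simp add: continuous_within)
    moreover have "(g \<longlongrightarrow> g a) (at_left 1)" using assms(3) a
      by (simp add: continuous_at filterlim_at_split)
    moreover have "eventually (\<lambda>x. f x = g x) (at_left (1::real))"
      proof -
      have "eventually (\<lambda>x. x \<in> {-1<..<1}) (at_left (1::real))" by (rule eventually_at_left_real) simp
      then show ?thesis by (rule eventually_mono) (use assms(4) in auto)
    qed
    ultimately have "(g \<longlongrightarrow> f a) (at_left 1)" using tendsto_cong by blast
    then show ?thesis using \<open>(g \<longlongrightarrow> g a) (at_left 1)\<close> tendsto_unique trivial_limit_at_left_real by blast
  next
    assume a: "a = -1"
    have "(f \<longlongrightarrow> f a) (at_right (-1))" using cf a at_within_Icc_at_right[of "-1::real" 1]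
      by (simp add: continuous_within)
    moreover have "(g \<longlongrightarrow> g a) (at_right (-1))" using assms(3) a
      by (simp add: continuous_at filterlim_at_split)
    moreover have "eventually (\<lambda>x. f x = g x) (at_right (-1::real))"
      proof -
      have "eventually (\<lambda>x. x \<in> {-1<..<1}) (at_right (-1::real))" by (rule eventually_at_right_real) simp
      then show ?thesis by (rule eventually_mono) (use assms(4) in auto)
    qed
    ultimately have "(g \<longlongrightarrow> f a) (at_right (-1))" using tendsto_cong by blast
    then show ?thesis using \<open>(g \<longlongrightarrow> g a) (at_right (-1))\<close> tendsto_unique trivial_limit_at_right_real by blast
  qed
qed

lemma endpoint_deriv:
  fixes f g :: "real \<Rightarrow> real" and a g' :: real
  assumes "(f has_real_derivative 0) (at a within {-1..1})" "a \<in> {-1..1}"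
    and "(g has_real_derivative g') (at a)" "\<And>x. x \<in> {-1..1} \<Longrightarrow> f x = g x"
  shows "g' = 0"
proof -
  have "(g has_real_derivative 0) (at a within {-1..1})"
    using has_field_derivative_transform_within[OF assms(1) zero_less_one assms(2)] assms(4) by blast
  moreover have "(g has_real_derivative g') (at a within {-1..1})"
    using assms(3) by (rule has_field_derivative_at_within)
  ultimately show ?thesis
    using vector_derivative_unique_within_closed_interval[of "-1" 1 a g g' 0] assms(2)
    by (simp add: has_real_derivative_iff_has_vector_derivative cbox_interval)
qed

theorem theorem4p2:
  fixes \<alpha> :: real and rc :: "real \<Rightarrow> real"
  assumes "\<alpha> > 0"
    and "rc_bvp \<alpha> rc"
  shows "\<forall>x\<in>{-1<..<1}. rc x < 0"
proof -
  note H = assms(2)[unfolded rc_bvp_def]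
  define u1 where "u1 = deriv rc"
  define u2 where "u2 = deriv u1"
  define u3 where "u3 = deriv u2"
  define u4 where "u4 = deriv u3"
  have fp: "(deriv ^^ 0) rc = rc" "(deriv ^^ 1) rc = u1" "(deriv ^^ 2) rc = u2"
     "(deriv ^^ 3) rc = u3" "(deriv ^^ 4) rc = u4"
    by (simp_all add: u1_def u2_def u3_def u4_def eval_nat_numeral)
  have diff: "rc differentiable at x" "u1 differentiable at x" "u2 differentiable at x" "u3 differentiable at x"
    if "x \<in> {-1<..<1}" for x
    using H[THEN conjunct1, rule_format, of 0 x] H[THEN conjunct1, rule_format, of 1 x]
      H[THEN conjunct1, rule_format, of 2 x] H[THEN conjunct1, rule_format, of 3 x] that
    unfolding fp by simp_all
  have ode: "u4 x + rc x / \<alpha> ^ 4 = - 2 / \<alpha>" if "x \<in> {-1<..<1}" for x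
    using H that fp by auto
  have D0: "(rc has_real_derivative u1 x) (at x)" if "x \<in> {-1<..<1}" for x
    using diff(1)[OF that] unfolding u1_def by (simp add: DERIV_deriv_iff_real_differentiable)
  have D1: "(u1 has_real_derivative u2 x) (at x)" if "x \<in> {-1<..<1}" for x
    using diff(2)[OF that] unfolding u2_def by (simp add: DERIV_deriv_iff_real_differentiable)
  have D2: "(u2 has_real_derivative u3 x) (at x)" if "x \<in> {-1<..<1}" for x
    using diff(3)[OF that] unfolding u3_def by (simp add: DERIV_deriv_iff_real_differentiable)
  have D3: "(u3 has_real_derivative u4 x) (at x)" if "x \<in> {-1<..<1}" for x
    using diff(4)[OF that] unfolding u4_def by (simp add: DERIV_deriv_iff_real_differentiable)
  define k where "k = 1 / \<alpha> ^ 4"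
  define c where "c = 2 * \<alpha> ^ 3"
  define b where "b = 1 / (sqrt 2 * \<alpha>)"
  have a0: "\<alpha> > 0" by fact
  have b0: "b > 0" unfolding b_def using a0 by simp
  have c0: "c > 0" unfolding c_def using a0 by simp
  have k0: "k \<ge> 0" unfolding k_def using a0 by simp
  have s4: "sqrt 2 ^ 4 = (4::real)" by (simp add: power4_eq_xxxx)
  have b4: "4 * b ^ 4 = k" unfolding b_def k_def using a0 s4 by (simp add: power_mult_distrib field_simps)
  have ck: "k * c = 2 / \<alpha>" unfolding k_def c_def using a0 by (simp add: field_simps eval_nat_numeral)
  define A where "A = rc 0 + c"
  define B where "B = u2 0 / (2 * b ^ 2)"
  define G where "G = (u1 0 / b + u3 0 / (2 * b ^ 3)) / 2"
  define J where "J = (u1 0 / b - u3 0 / (2 * b ^ 3)) / 2"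
  define p0 where "p0 x = Lc A B G J (b * x)" for x
  define p1 where "p1 x = b * Lc (G+J) (G-J) (B-A) (A+B) (b * x)" for x
  define p2 where "p2 x = b^2 * Lc (2*B) (-2*A) (-2*J) (2*G) (b * x)" for x
  define p3 where "p3 x = b^3 * Lc (2*G-2*J) (-2*J-2*G) (-2*A-2*B) (2*B-2*A) (b * x)" for x
  have P0: "(p0 has_real_derivative p1 x) (at x)" for x
    unfolding p0_def p1_def by (rule Lc_deriv)
  have P1: "(p1 has_real_derivative p2 x) (at x)" for x
    unfolding p1_def by (rule DERIV_cong, rule DERIV_cmult, rule Lc_deriv)
      (simp add: p2_def Lc_def algebra_simps power2_eq_square)
  have P2: "(p2 has_real_derivative p3 x) (at x)" for x
    unfolding p2_def by (rule DERIV_cong, rule DERIV_cmult, rule Lc_deriv)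
      (simp add: p3_def Lc_def algebra_simps power2_eq_square power3_eq_cube)
  have P3: "(p3 has_real_derivative (- k * p0 x)) (at x)" for x
    unfolding p3_def by (rule DERIV_cong, rule DERIV_cmult, rule Lc_deriv)
      (simp add: p0_def Lc_def b4[symmetric] algebra_simps power3_eq_cube power4_eq_xxxx)
  define f0 where "f0 x = rc x + c - p0 x" for x
  define f1 where "f1 x = u1 x - p1 x" for x
  define f2 where "f2 x = u2 x - p2 x" for x
  define f3 where "f3 x = u3 x - p3 x" for x
  have eq: "f0 x = 0" if x: "x \<in> {-1<..<1}" for x
  proof (rule ode4_zero[OF k0 _ _ _ _ _ _ _ _ x])
    show "(f0 has_real_derivative f1 y) (at y)" if "y \<in> {-1<..<1}" for y
      unfolding f0_def[abs_def] f1_def using D0[OF that] P0[of y]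
      by (auto intro!: derivative_eq_intros)
    show "(f1 has_real_derivative f2 y) (at y)" if "y \<in> {-1<..<1}" for y
      unfolding f1_def[abs_def] f2_def using D1[OF that] P1[of y]
      by (auto intro!: derivative_eq_intros)
    show "(f2 has_real_derivative f3 y) (at y)" if "y \<in> {-1<..<1}" for y
      unfolding f2_def[abs_def] f3_def using D2[OF that] P2[of y]
      by (auto intro!: derivative_eq_intros)
    show "(f3 has_real_derivative (- k * f0 y)) (at y)" if "y \<in> {-1<..<1}" for y
    proof -
      have "(f3 has_real_derivative (u4 y - (- k * p0 y))) (at y)"
        unfolding f3_def[abs_def] using D3[OF that] P3[of y]
        by (auto intro!: derivative_eq_intros)
      moreover have "u4 y - (- k * p0 y) = - k * f0 y"
      proof -
        have "c / \<alpha> ^ 4 = 2 / \<alpha>" using ck unfolding k_def by simp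
        then have h: "u4 y = - (c / \<alpha> ^ 4) - rc y / \<alpha> ^ 4" using ode[OF that] by linarith
        show ?thesis unfolding f0_def k_def h using a0 by (simp add: field_simps)
      qed
      ultimately show ?thesis by simp
    qed
    show "f0 0 = 0" unfolding f0_def p0_def A_def by (simp add: Lc_0)
    show "f1 0 = 0" unfolding f1_def p1_def G_def J_def using b0 by (simp add: Lc_0 field_simps)
    show "f2 0 = 0" unfolding f2_def p2_def B_def using b0 by (simp add: Lc_0 field_simps)
    show "f3 0 = 0" unfolding f3_def p3_def G_def J_def using b0 by (simp add: Lc_0 field_simps)
  qed
  have rc_eq: "rc x = p0 x - c" if "x \<in> {-1<..<1}" for x using eq[OF that] unfolding f0_def by simp
  have contp: "continuous (at a) (\<lambda>x. p0 x - c)" for a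
    using P0[of a] by (intro continuous_intros) (rule DERIV_isCont)
  have ev1: "rc 1 = p0 1 - c"
    by (rule endpoint_value[OF H[THEN conjunct2, THEN conjunct2, THEN conjunct2, THEN conjunct2, THEN conjunct2] _ contp rc_eq]) auto
  have ev2: "rc (-1) = p0 (-1) - c"
    by (rule endpoint_value[OF H[THEN conjunct2, THEN conjunct2, THEN conjunct2, THEN conjunct2, THEN conjunct1] _ contp rc_eq]) auto
  have rc_eq2: "rc x = p0 x - c" if "x \<in> {-1..1}" for x
    using that rc_eq ev1 ev2 by (cases "x = 1 \<or> x = -1") auto
  have dp: "((\<lambda>x. p0 x - c) has_real_derivative p1 a) (at a)" for a
    using P0[of a] by (auto intro!: derivative_eq_intros)
  have d1: "p1 1 = 0"
    by (rule endpoint_deriv[OF H[THEN conjunct2, THEN conjunct2, THEN conjunct2, THEN conjunct2, THEN conjunct2] _ dp rc_eq2]) auto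
  have d2: "p1 (-1) = 0"
    by (rule endpoint_deriv[OF H[THEN conjunct2, THEN conjunct2, THEN conjunct2, THEN conjunct2, THEN conjunct1] _ dp rc_eq2]) auto
  have e1: "Lc A B G J b = c" using ev1 H unfolding p0_def by simp
  have e2: "Lc A B G J (-b) = c" using ev2 H unfolding p0_def by simp
  have e3: "Lc (G+J) (G-J) (B-A) (A+B) b = 0" using d1 b0 unfolding p1_def by simp
  have e4: "Lc (G+J) (G-J) (B-A) (A+B) (-b) = 0" using d2 b0 unfolding p1_def by simp
  show ?thesis
  proof
    fix x :: real assume x: "x \<in> {-1<..<1}"
    have "\<bar>b * x\<bar> < b" using x b0 by (simp add: abs_mult abs_less_iff)
    then have "Lc A B G J (b * x) < c" by (rule final_alg[OF b0 c0 _ e1 e2 e3 e4])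
    then show "rc x < 0" using rc_eq[OF x] unfolding p0_def by simp
  qed
qed

end
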